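(* Let $(x_t^m)_{t\ge0}$ be iterates generated by Algorithm SAVIC (described in the context) run with identical data. Suppose $f$ is $\mu$-strongly convex and $L$-smooth, that the matrices $\hat D^{t_p}$ satisfy $\alpha I\preceq\hat D^{t_p}\preceq\Gamma I$ for constants $0<\alpha\le\Gamma$, and that $\gamma\le\frac{\alpha}{4L}$. Then for any $t$ with $t_p\le t<t_{p+1}$, $$\mathbb E\|\hat x_{t+1}-x_*\|^2_{\hat D^{t_p}}\le\left(1-\frac{\gamma\mu}{\Gamma}\right)\mathbb E\|\hat x_t-x_*\|^2_{\hat D^{t_p}}+\frac{\gamma^2}{\alpha}\mathbb E\|g_t-\bar g_t\|^2-\frac{\gamma}{2}\mathbb E[D_f(\hat x_t,x_* )]+\frac{2\gamma L}{\alpha}V_t.$$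
   Context: Problem: minimize $f(x)=\frac1M\sum_m f_m(x)$, $f_m(x)=\mathbb E_{z\sim\mathcal D_m}[f_m(x,z)]$, $x_*$ the solution; identical data means $f_1=\dots=f_M=f$ and stochastic gradients $\nabla f(x_t^m,z_m)$ with $\mathbb E[\nabla f(x_t^m,z_m)\mid x_t^m]=\nabla f(x_t^m)$. $\mu$-strong convexity and $L$-smoothness: $\frac{\mu}{2}\|x-y\|^2\le f(x)-f(y)-\langle\nabla f(y),x-y\rangle\le\frac{L}{2}\|x-y\|^2$. $\|x\|_A^2=\langle x,Ax\rangle$. Bregman divergence $D_f(x,y)=f(x)-f(y)-\langle\nabla f(y),x-y\rangle$. Algorithm SAVIC: stepsize $\gamma>0$, $x_0^m=x_0$, synchronization times $t_0=0<t_1<\dots$; at $t=t_p$ a diagonal positive definite matrix $\hat D^{t_p}$ is updated and used by all clients for $t_p\le t<t_{p+1}$; client $m$ samples $z_m\sim\mathcal D_m$ i.i.d. and sets $x_{t+1}^m=\frac1M\sum_j(x_t^j-\gamma(\hat D^{t_p})^{-1}\nabla f_j(x_t^j,z_j))$ if $t=t_p$ for some $p$, else $x_{t+1}^m=x_t^m-\gamma(\hat D^{t_p})^{-1}\nabla f_m(x_t^m,z_m)$. Notation: $g_t^m=\nabla f(x_t^m,z_m)$, $g_t=\frac1M\sum_mg_t^m$, $\bar g_t=\mathbb E[g_t]=\frac1M\sum_m\nabla f(x_t^m)$; $\hat x_t=\frac1M\sum_mx_t^m$; $V_t=\frac1M\sum_m\|x_t^m-\hat x_t\|^2_{\hat D^{t_p}}$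 for $t_p\le t<t_{p+1}$. *)

theory Defs
  imports "HOL-Probability.Probability"
begin

definition sqnormA :: "real^'n^'n \<Rightarrow> real^'n \<Rightarrow> real" where
  "sqnormA A x = x \<bullet> (A *v x)"

definition bregman :: "(real^'n \<Rightarrow> real) \<Rightarrow> (real^'n \<Rightarrow> real^'n) \<Rightarrow> real^'n \<Rightarrow> real^'n \<Rightarrow> real" where
  "bregman f gf x y = f x - f y - gf y \<bullet> (x - y)"

definition diag_mat :: "real^'n^'n \<Rightarrow> bool" where
  "diag_mat A \<longleftrightarrow> (\<forall>i j. i \<noteq> j \<longrightarrow> A $ i $ j = 0)"

text \<open>One SAVIC step for client m (clients 0..<M), identical data, current iterates xs,
  preconditioner D, stochastic gradients gs j (already evaluated at xs j),
  sync = (t is a synchronization time t_p).\<close>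
definition savic_step :: "nat \<Rightarrow> real \<Rightarrow> real^'n^'n \<Rightarrow> bool \<Rightarrow> (nat \<Rightarrow> real^'n) \<Rightarrow> (nat \<Rightarrow> real^'n) \<Rightarrow> nat \<Rightarrow> real^'n" where
  "savic_step M \<gamma> D sync xs gs m =
     (if sync then (1 / real M) *\<^sub>R (\<Sum>j<M. xs j - \<gamma> *\<^sub>R (matrix_inv D *v gs j))
      else xs m - \<gamma> *\<^sub>R (matrix_inv D *v gs m))"

definition avg :: "nat \<Rightarrow> (nat \<Rightarrow> real^'n) \<Rightarrow> real^'n" where
  "avg M v = (1 / real M) *\<^sub>R (\<Sum>m<M. v m)"

end

theory Submission
  imports Defs
begin

lemma diag_mv: "diag_mat D \<Longrightarrow> (D *v u) $ i = D $ i $ i * u $ i"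
  unfolding diag_mat_def matrix_vector_mult_def
  by (simp add: sum.remove[of UNIV i])

lemma diag_sym: "diag_mat D \<Longrightarrow> x \<bullet> (D *v y) = (D *v x) \<bullet> y"
  by (simp add: inner_vec_def diag_mv mult_ac)

lemma inv_ok:
  fixes D :: "real^'n^'n"
  assumes "\<And>v. \<alpha> * (norm v)\<^sup>2 \<le> sqnormA D v" "\<alpha> > 0"
  shows "D *v (matrix_inv D *v e) = e"
proof -
  have z: "\<forall>x. D *v x = 0 \<longrightarrow> x = 0"
  proof (intro allI impI)
    fix x assume "D *v x = 0"
    then have "\<alpha> * (norm x)\<^sup>2 \<le> 0" using assms(1)[of x] by (simp add: sqnormA_def)
    then show "x = 0" using assms(2) by (simp add: mult_le_0_iff)
  qed
  have inj: "inj ((*v) D)"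
    using linear_inj_iff_eq_0[of "(*v) D"] z by simp
  have "surj ((*v) D)" using linear_inj_imp_surj[of "(*v) D"] inj by simp
  then have "invertible D" using inj invertible_eq_bij bij_def by blast
  then have "D ** matrix_inv D = mat 1"
    unfolding invertible_def matrix_inv_def by (rule someI_ex[where P="\<lambda>A'. D ** A' = mat 1 \<and> A' ** D = mat 1", THEN conjunct1])
  then show ?thesis by (metis matrix_vector_mul_assoc matrix_vector_mul_lid)
qed
lemma sum_dev_zero:
  fixes a :: "nat \<Rightarrow> real^'n"
  assumes "M \<ge> 1"
  shows "(\<Sum>j<M. a j - avg M a) = 0"
proof -
  have "(\<Sum>j<M. a j - avg M a) = (\<Sum>j<M. a j) - real M *\<^sub>R avg M a"
    by (simp add: sum_subtractf sum_constant_scaleR del: sum_constant)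
  also have "real M *\<^sub>R avg M a = (\<Sum>j<M. a j)"
    using assms by (simp add: avg_def)
  finally show ?thesis by simp
qed

lemma avg_dev:
  fixes a :: "nat \<Rightarrow> real^'n"
  assumes "M \<ge> 1"
  shows "(1 / real M) * (\<Sum>j<M. (norm (a j - c))\<^sup>2)
     = (norm (avg M a - c))\<^sup>2 + (1 / real M) * (\<Sum>j<M. (norm (a j - avg M a))\<^sup>2)"
proof -
  let ?h = "avg M a"
  have t: "(norm (a j - c))\<^sup>2 = (norm (a j - ?h))\<^sup>2 + 2 * ((a j - ?h) \<bullet> (?h - c)) + (norm (?h - c))\<^sup>2" for j
  proof -
    have "a j - c = (a j - ?h) + (?h - c)" by simp
    then have "(norm (a j - c))\<^sup>2 = (norm ((a j - ?h) + (?h - c)))\<^sup>2" by metis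
    also have "\<dots> = (norm (a j - ?h))\<^sup>2 + 2 * ((a j - ?h) \<bullet> (?h - c)) + (norm (?h - c))\<^sup>2"
      by (simp only: power2_norm_eq_inner inner_add_left inner_add_right inner_commute[of "?h - c" "a j - ?h"])
    finally show ?thesis .
  qed
  have "(\<Sum>j<M. (norm (a j - c))\<^sup>2) = (\<Sum>j<M. (norm (a j - ?h))\<^sup>2) + 2 * ((\<Sum>j<M. a j - ?h) \<bullet> (?h - c)) + real M * (norm (?h - c))\<^sup>2"
    by (simp add: t sum.distrib sum_distrib_left inner_sum_left)
  also have "(\<Sum>j<M. a j - ?h) = 0" using sum_dev_zero[OF assms] .
  finally have "(\<Sum>j<M. (norm (a j - c))\<^sup>2) = (\<Sum>j<M. (norm (a j - ?h))\<^sup>2) + real M * (norm (?h - c))\<^sup>2" by simp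
  then show ?thesis using assms by (simp add: field_simps)
qed

lemma jensen_sq:
  fixes a :: "nat \<Rightarrow> real^'n"
  assumes "M \<ge> 1"
  shows "(norm (avg M a))\<^sup>2 \<le> (1 / real M) * (\<Sum>j<M. (norm (a j))\<^sup>2)"
  using avg_dev[OF assms, of a 0] by (simp add: sum_nonneg)

lemma dinv_bound:
  fixes D :: "real^'n^'n"
  assumes "\<And>v. \<alpha> * (norm v)\<^sup>2 \<le> sqnormA D v" "\<alpha> > 0"
  shows "0 \<le> (matrix_inv D *v e) \<bullet> e \<and> (matrix_inv D *v e) \<bullet> e \<le> (norm e)\<^sup>2 / \<alpha>"
proof -
  let ?w = "matrix_inv D *v e"
  have we: "?w \<bullet> e = sqnormA D ?w" using inv_ok[OF assms] by (simp add: sqnormA_def)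
  have a: "\<alpha> * (norm ?w)\<^sup>2 \<le> ?w \<bullet> e" using assms(1)[of ?w] we by simp
  have b: "?w \<bullet> e \<le> norm ?w * norm e" by (rule Cauchy_Schwarz_ineq2[THEN abs_le_D1])
  have nw: "\<alpha> * norm ?w \<le> norm e"
  proof (cases "norm ?w = 0")
    case True then show ?thesis by simp
  next
    case False
    then have "norm ?w > 0" by simp
    moreover have "norm ?w * (\<alpha> * norm ?w) \<le> norm ?w * norm e"
      using a b by (simp add: power2_eq_square algebra_simps)
    ultimately show ?thesis by simp
  qed
  have "?w \<bullet> e \<le> norm e * norm e / \<alpha>"
  proof -
    have "norm ?w \<le> norm e / \<alpha>" using nw assms(2) by (simp add: field_simps)
    then have "norm ?w * norm e \<le> norm e / \<alpha> * norm e" by (rule mult_right_mono[OF _ norm_ge_zero])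
    then show ?thesis using b by (simp add: mult.commute)
  qed
  moreover have "0 \<le> ?w \<bullet> e" using a assms(2) by (smt (verit) mult_nonneg_nonneg zero_le_power2)
  ultimately show ?thesis by (simp add: power2_eq_square)
qed
lemma grad_sq:
  fixes f :: "real^'n \<Rightarrow> real" and gf :: "real^'n \<Rightarrow> real^'n"
  assumes ub: "\<And>x y. f x - f y - gf y \<bullet> (x - y) \<le> L / 2 * (norm (x - y))\<^sup>2"
    and mn: "\<And>y. f xs \<le> f y" and L: "L > 0"
  shows "(norm (gf x))\<^sup>2 \<le> 2 * L * (f x - f xs)"
proof -
  let ?g = "gf x"
  let ?y = "x - (1 / L) *\<^sub>R ?g"
  have d: "?y - x = - ((1 / L) *\<^sub>R ?g)" by simp
  have i: "?g \<bullet> (?y - x) = - (1 / L) * (norm ?g)\<^sup>2"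
    by (simp only: d inner_minus_right inner_scaleR_right power2_norm_eq_inner)
  have n: "(norm (?y - x))\<^sup>2 = (1 / L)\<^sup>2 * (norm ?g)\<^sup>2"
    by (simp only: d norm_minus_cancel norm_scaleR power_mult_distrib) (simp add: L abs_of_pos)
  have "f ?y - f x - ?g \<bullet> (?y - x) \<le> L / 2 * (norm (?y - x))\<^sup>2" by (rule ub)
  then have "f ?y \<le> f x - (1 / L) * (norm ?g)\<^sup>2 + L / 2 * ((1 / L)\<^sup>2 * (norm ?g)\<^sup>2)"
    unfolding i n by simp
  also have "\<dots> = f x - (norm ?g)\<^sup>2 / (2 * L)" using L by (simp add: field_simps power2_eq_square)
  finally have "f xs \<le> f x - (norm ?g)\<^sup>2 / (2 * L)" using mn[of ?y] by simp
  then show ?thesis using L by (simp add: field_simps)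
qed
lemma det_part:
  fixes f :: "real^'n \<Rightarrow> real" and gf :: "real^'n \<Rightarrow> real^'n"
    and M :: nat and \<mu> L \<alpha> \<Gamma> \<gamma> :: real
    and D :: "real^'n^'n" and xs :: "nat \<Rightarrow> real^'n" and xstar :: "real^'n"
  assumes M_pos: "M \<ge> 1"
    and strong_smooth: "\<And>x y. \<mu> / 2 * (norm (x - y))\<^sup>2 \<le> f x - f y - gf y \<bullet> (x - y)
                          \<and> f x - f y - gf y \<bullet> (x - y) \<le> L / 2 * (norm (x - y))\<^sup>2"
    and mu_pos: "\<mu> > 0"
    and xstar_min: "\<And>y. f xstar \<le> f y"
    and alpha_pos: "0 < \<alpha>" and alpha_le: "\<alpha> \<le> \<Gamma>"
    and D_bounds: "\<And>v. \<alpha> * (norm v)\<^sup>2 \<le> sqnormA D v \<and> sqnormA D v \<le> \<Gamma> * (norm v)\<^sup>2"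
    and gamma_pos: "\<gamma> > 0" and L_pos: "L > 0" and gamma_le: "\<gamma> * L / \<alpha> \<le> 1 / 4"
  shows "sqnormA D (avg M xs - xstar) - 2 * \<gamma> * ((avg M xs - xstar) \<bullet> avg M (\<lambda>j. gf (xs j)))
        + \<gamma>\<^sup>2 / \<alpha> * (norm (avg M (\<lambda>j. gf (xs j))))\<^sup>2
     \<le> (1 - \<gamma> * \<mu> / \<Gamma>) * sqnormA D (avg M xs - xstar)
       - \<gamma> / 2 * bregman f gf (avg M xs) xstar
       + 2 * \<gamma> * L / \<alpha> * ((1 / real M) * (\<Sum>m<M. sqnormA D (xs m - avg M xs)))"
proof -
  define xh where "xh = avg M xs"
  define gb where "gb = avg M (\<lambda>j. gf (xs j))"
  define B where "B = xh - xstar"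
  define V where "V = (1 / real M) * (\<Sum>m<M. (norm (xs m - xh))\<^sup>2)"
  define VD where "VD = (1 / real M) * (\<Sum>m<M. sqnormA D (xs m - xh))"
  define A where "A = (1 / real M) * (\<Sum>m<M. (norm (xs m - xstar))\<^sup>2)"
  define G2 where "G2 = (norm gb)\<^sup>2"
  define sD where "sD = sqnormA D B"
  define \<Delta> where "\<Delta> = f xh - f xstar"
  have Mpos: "real M > 0" using M_pos by simp
  have ub: "\<And>x y. f x - f y - gf y \<bullet> (x - y) \<le> L / 2 * (norm (x - y))\<^sup>2" using strong_smooth by blast
  have gs0: "gf xstar = 0"
    using grad_sq[of f gf L xstar xstar, OF ub xstar_min L_pos] by simp
  have breg: "bregman f gf xh xstar = \<Delta>" by (simp add: bregman_def gs0 \<Delta>_def)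
  have Dpos: "\<Delta> \<ge> 0" using xstar_min[of xh] by (simp add: \<Delta>_def)
  have per: "gf (xs m) \<bullet> (xstar - xh) \<le> f xstar - f xh - \<mu> / 2 * (norm (xs m - xstar))\<^sup>2 + L / 2 * (norm (xs m - xh))\<^sup>2" for m
  proof -
    have l: "\<mu> / 2 * (norm (xstar - xs m))\<^sup>2 \<le> f xstar - f (xs m) - gf (xs m) \<bullet> (xstar - xs m)"
      using strong_smooth by blast
    have u: "f xh - f (xs m) - gf (xs m) \<bullet> (xh - xs m) \<le> L / 2 * (norm (xh - xs m))\<^sup>2"
      using strong_smooth by blast
    have e: "gf (xs m) \<bullet> (xstar - xh) = gf (xs m) \<bullet> (xstar - xs m) - gf (xs m) \<bullet> (xh - xs m)"
      by (simp add: inner_diff_right)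
    show ?thesis using l u e by (simp add: norm_minus_commute)
  qed
  have Bgb: "- (B \<bullet> gb) = (1 / real M) * (\<Sum>m<M. gf (xs m) \<bullet> (xstar - xh))"
    unfolding B_def gb_def avg_def
    by (simp add: inner_sum_right inner_commute inner_diff_left inner_diff_right sum_subtractf) (metis minus_diff_eq minus_divide_left)
  have c1: "- (B \<bullet> gb) \<le> \<Delta> * (-1) - \<mu> / 2 * A + L / 2 * V"
  proof -
    have "(\<Sum>m<M. gf (xs m) \<bullet> (xstar - xh)) \<le> (\<Sum>m<M. f xstar - f xh - \<mu> / 2 * (norm (xs m - xstar))\<^sup>2 + L / 2 * (norm (xs m - xh))\<^sup>2)"
      by (rule sum_mono) (rule per)
    also have "\<dots> = real M * (f xstar - f xh) - \<mu> / 2 * (\<Sum>m<M. (norm (xs m - xstar))\<^sup>2) + L / 2 * (\<Sum>m<M. (norm (xs m - xh))\<^sup>2)"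
      by (simp add: sum.distrib sum_subtractf sum_distrib_left)
    finally have "(1 / real M) * (\<Sum>m<M. gf (xs m) \<bullet> (xstar - xh)) \<le> (1 / real M) * (real M * (f xstar - f xh) - \<mu> / 2 * (\<Sum>m<M. (norm (xs m - xstar))\<^sup>2) + L / 2 * (\<Sum>m<M. (norm (xs m - xh))\<^sup>2))"
      using Mpos by (intro mult_left_mono) auto
    also have "\<dots> = \<Delta> * (-1) - \<mu> / 2 * A + L / 2 * V"
      using Mpos by (simp add: A_def V_def \<Delta>_def field_simps)
    finally show ?thesis using Bgb by simp
  qed
  have c2: "A \<ge> (norm B)\<^sup>2"
    using avg_dev[OF M_pos, of xs xstar] by (simp add: A_def B_def xh_def sum_nonneg)
  have Fs: "(1 / real M) * (\<Sum>m<M. f (xs m)) \<le> f xh + L / 2 * V"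
  proof -
    have "(\<Sum>m<M. f (xs m) - f xh - gf xh \<bullet> (xs m - xh)) \<le> (\<Sum>m<M. L / 2 * (norm (xs m - xh))\<^sup>2)"
      by (rule sum_mono) (rule ub)
    moreover have "(\<Sum>m<M. gf xh \<bullet> (xs m - xh)) = 0"
      using sum_dev_zero[OF M_pos, of xs] by (simp add: inner_sum_right[symmetric] xh_def)
    ultimately have "(\<Sum>m<M. f (xs m)) - real M * f xh \<le> L / 2 * (\<Sum>m<M. (norm (xs m - xh))\<^sup>2)"
      by (simp add: sum_subtractf sum_distrib_left)
    then have "(1 / real M) * ((\<Sum>m<M. f (xs m)) - real M * f xh) \<le> (1 / real M) * (L / 2 * (\<Sum>m<M. (norm (xs m - xh))\<^sup>2))"
      using Mpos by (intro mult_left_mono) auto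
    moreover have "(1 / real M) * (\<Sum>m<M. f (xs m)) = (1 / real M) * ((\<Sum>m<M. f (xs m)) - real M * f xh) + f xh"
      using Mpos by (simp add: field_simps)
    moreover have "(1 / real M) * (L / 2 * (\<Sum>m<M. (norm (xs m - xh))\<^sup>2)) = L / 2 * V"
      by (simp add: V_def)
    ultimately show ?thesis by linarith
  qed
  have c3: "G2 \<le> 2 * L * \<Delta> + L\<^sup>2 * V"
  proof -
    have "G2 \<le> (1 / real M) * (\<Sum>m<M. (norm (gf (xs m)))\<^sup>2)"
      unfolding G2_def gb_def by (rule jensen_sq[OF M_pos])
    also have "\<dots> \<le> (1 / real M) * (\<Sum>m<M. 2 * L * (f (xs m) - f xstar))"
      using Mpos by (intro mult_left_mono sum_mono grad_sq[OF ub xstar_min L_pos]) auto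
    also have "\<dots> = 2 * L * ((1 / real M) * (\<Sum>m<M. f (xs m)) - f xstar)"
      using Mpos by (simp add: sum_subtractf sum_distrib_left[symmetric] field_simps)
    also have "\<dots> \<le> 2 * L * (f xh + L / 2 * V - f xstar)"
      using Fs L_pos by (intro mult_left_mono) auto
    also have "\<dots> = 2 * L * \<Delta> + L\<^sup>2 * V" by (simp add: \<Delta>_def power2_eq_square field_simps)
    finally show ?thesis .
  qed
  have Gpos: "\<Gamma> > 0" using alpha_pos alpha_le by simp
  have sDle: "sD \<le> \<Gamma> * (norm B)\<^sup>2" using D_bounds[of B] by (simp add: sD_def)
  have VDge: "VD \<ge> \<alpha> * V"
  proof -
    have "(\<Sum>m<M. \<alpha> * (norm (xs m - xh))\<^sup>2) \<le> (\<Sum>m<M. sqnormA D (xs m - xh))"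
      by (rule sum_mono) (use D_bounds in blast)
    then show ?thesis using Mpos unfolding VD_def V_def
      by (simp add: sum_distrib_left[symmetric] divide_right_mono)
  qed
  have Vpos: "V \<ge> 0" unfolding V_def using Mpos by (simp add: sum_nonneg)
  have k1: "\<gamma>\<^sup>2 / \<alpha> * G2 \<le> \<gamma>\<^sup>2 / \<alpha> * (2 * L * \<Delta> + L\<^sup>2 * V)"
    using c3 alpha_pos by (intro mult_left_mono) auto
  have k2: "\<gamma>\<^sup>2 / \<alpha> * (2 * L * \<Delta> + L\<^sup>2 * V) \<le> \<gamma> / 2 * \<Delta> + \<gamma> * L / 4 * V"
  proof -
    have "\<gamma>\<^sup>2 / \<alpha> * (2 * L * \<Delta> + L\<^sup>2 * V) = (\<gamma> * L / \<alpha>) * (2 * \<gamma> * \<Delta> + \<gamma> * L * V)"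
      by (simp add: power2_eq_square field_simps)
    also have "\<dots> \<le> (1 / 4) * (2 * \<gamma> * \<Delta> + \<gamma> * L * V)"
      using gamma_le gamma_pos Dpos Vpos L_pos by (intro mult_right_mono) auto
    finally show ?thesis by (simp add: field_simps)
  qed
  have k3: "\<gamma> * \<mu> / \<Gamma> * sD \<le> \<gamma> * \<mu> * A"
  proof -
    have "\<gamma> * \<mu> / \<Gamma> * sD \<le> \<gamma> * \<mu> / \<Gamma> * (\<Gamma> * (norm B)\<^sup>2)"
      using sDle gamma_pos mu_pos Gpos by (intro mult_left_mono) auto
    also have "\<dots> = \<gamma> * \<mu> * (norm B)\<^sup>2" using Gpos by simp
    also have "\<dots> \<le> \<gamma> * \<mu> * A" using c2 gamma_pos mu_pos by (intro mult_left_mono) auto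
    finally show ?thesis .
  qed
  have k4: "2 * \<gamma> * L * V \<le> 2 * \<gamma> * L / \<alpha> * VD"
  proof -
    have "2 * \<gamma> * L / \<alpha> * (\<alpha> * V) \<le> 2 * \<gamma> * L / \<alpha> * VD"
      using VDge gamma_pos L_pos alpha_pos by (intro mult_left_mono) auto
    then show ?thesis using alpha_pos by simp
  qed
  have main: "sD - 2 * \<gamma> * (B \<bullet> gb) + \<gamma>\<^sup>2 / \<alpha> * G2
      \<le> (1 - \<gamma> * \<mu> / \<Gamma>) * sD - \<gamma> / 2 * \<Delta> + 2 * \<gamma> * L / \<alpha> * VD"
  proof -
    have "- 2 * \<gamma> * (B \<bullet> gb) = 2 * \<gamma> * (- (B \<bullet> gb))" by simp
    also have "\<dots> \<le> 2 * \<gamma> * (\<Delta> * (-1) - \<mu> / 2 * A + L / 2 * V)"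
      using c1 gamma_pos by (intro mult_left_mono) auto
    also have "\<dots> = - 2 * \<gamma> * \<Delta> - \<gamma> * \<mu> * A + \<gamma> * L * V" by (simp add: field_simps)
    finally have t: "- 2 * \<gamma> * (B \<bullet> gb) \<le> - 2 * \<gamma> * \<Delta> - \<gamma> * \<mu> * A + \<gamma> * L * V" .
    have e: "(1 - \<gamma> * \<mu> / \<Gamma>) * sD = sD - \<gamma> * \<mu> / \<Gamma> * sD" by (simp add: algebra_simps)
    have p1: "\<gamma> * \<Delta> \<ge> 0" using gamma_pos Dpos by simp
    have p2: "\<gamma> * L * V \<ge> 0" using gamma_pos L_pos Vpos by simp
    have q1: "\<gamma> / 2 * \<Delta> = (\<gamma> * \<Delta>) / 2" "- 2 * \<gamma> * \<Delta> = - 2 * (\<gamma> * \<Delta>)"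
      "\<gamma> * L / 4 * V = (\<gamma> * L * V) / 4" "2 * \<gamma> * L * V = 2 * (\<gamma> * L * V)" by simp_all
    show ?thesis using t k1 k2 k3 k4 e p1 p2 q1 by linarith
  qed
  then show ?thesis
    unfolding sD_def B_def xh_def gb_def G2_def VD_def breg[unfolded xh_def] by simp
qed
lemma mv_sum: "(A::real^'n^'m) *v (\<Sum>j<(M::nat). v j) = (\<Sum>j<M. A *v v j)"
  by (induction M) (simp_all add: matrix_vector_right_distrib)

lemma avg_diff: "avg M a - avg M b = avg M (\<lambda>j. a j - b j)"
  by (simp add: avg_def sum_subtractf scaleR_diff_right)

lemma step_avg:
  assumes "M \<ge> 1"
  shows "avg M (savic_step M \<gamma> D sync xs gs) = avg M xs - \<gamma> *\<^sub>R (matrix_inv D *v avg M gs)"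
proof -
  let ?c = "avg M (\<lambda>m. xs m - \<gamma> *\<^sub>R (matrix_inv D *v gs m))"
  have c: "?c = avg M xs - \<gamma> *\<^sub>R (matrix_inv D *v avg M gs)"
    by (simp add: avg_def sum_subtractf scaleR_diff_right mv_sum[symmetric] matrix_vector_mult_scaleR scaleR_sum_right[symmetric])
  show ?thesis
  proof (cases sync)
    case True
    then have "savic_step M \<gamma> D sync xs gs = (\<lambda>m. ?c)"
      by (simp add: savic_step_def avg_def fun_eq_iff)
    then have "avg M (savic_step M \<gamma> D sync xs gs) = ?c"
      using assms by (simp add: avg_def sum_constant_scaleR del: sum_constant)
    then show ?thesis using c by simp
  next
    case False
    then have "savic_step M \<gamma> D sync xs gs = (\<lambda>m. xs m - \<gamma> *\<^sub>R (matrix_inv D *v gs m))"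
      by (simp add: savic_step_def fun_eq_iff)
    then show ?thesis using c by simp
  qed
qed

lemma quad_split:
  fixes D :: "real^'n^'n"
  assumes "diag_mat D" "\<And>v. \<alpha> * (norm v)\<^sup>2 \<le> sqnormA D v" "\<alpha> > 0"
  shows "sqnormA D (B - \<gamma> *\<^sub>R (matrix_inv D *v (u + e)))
     = sqnormA D B - 2 * \<gamma> * (B \<bullet> u) + \<gamma>\<^sup>2 * ((matrix_inv D *v u) \<bullet> u)
       + (- 2 * \<gamma> * (B \<bullet> e) + 2 * \<gamma>\<^sup>2 * ((matrix_inv D *v u) \<bullet> e))
       + \<gamma>\<^sup>2 * ((matrix_inv D *v e) \<bullet> e)"
proof -
  let ?I = "matrix_inv D"
  have inv: "\<And>v. D *v (?I *v v) = v" using inv_ok[OF assms(2,3)] .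
  have sym: "\<And>x y. x \<bullet> (D *v y) = (D *v x) \<bullet> y" using diag_sym[OF assms(1)] .
  let ?w = "?I *v (u + e)"
  have "sqnormA D (B - \<gamma> *\<^sub>R ?w) = B \<bullet> (D *v B) - \<gamma> * (B \<bullet> (D *v ?w)) - \<gamma> * (?w \<bullet> (D *v B)) + \<gamma>\<^sup>2 * (?w \<bullet> (D *v ?w))"
    by (simp add: sqnormA_def matrix_vector_mult_diff_distrib matrix_vector_mult_scaleR inner_diff_left inner_diff_right power2_eq_square algebra_simps)
  also have "?w \<bullet> (D *v B) = B \<bullet> (u + e)" using sym[of ?w B] inv[of "u+e"] by (simp add: inner_commute)
  also have "B \<bullet> (D *v ?w) = B \<bullet> (u + e)" using inv by simp
  also have "?w \<bullet> (D *v ?w) = ?w \<bullet> (u + e)" using inv by simp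
  also have "?w \<bullet> (u + e) = (?I *v u) \<bullet> u + 2 * ((?I *v u) \<bullet> e) + (?I *v e) \<bullet> e"
  proof -
    have "(?I *v e) \<bullet> u = (?I *v e) \<bullet> (D *v (?I *v u))" using inv by simp
    also have "\<dots> = (D *v (?I *v e)) \<bullet> (?I *v u)" using sym by simp
    also have "\<dots> = (?I *v u) \<bullet> e" using inv by (simp add: inner_commute)
    finally have "(?I *v e) \<bullet> u = (?I *v u) \<bullet> e" .
    then show ?thesis by (simp add: matrix_vector_right_distrib inner_add_left inner_add_right)
  qed
  finally show ?thesis by (simp add: sqnormA_def inner_add_right algebra_simps)
qed
theorem lemma3:
  fixes f :: "real^'n \<Rightarrow> real" and gf :: "real^'n \<Rightarrow> real^'n"
    and sgf :: "real^'n \<Rightarrow> 'z \<Rightarrow> real^'n"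
    and P :: "'w measure" and S :: "'z measure" and Dz :: "'z measure"
    and Z :: "nat \<Rightarrow> 'w \<Rightarrow> 'z"
    and M :: nat and \<mu> L \<alpha> \<Gamma> \<gamma> :: real
    and D :: "real^'n^'n" and xs :: "nat \<Rightarrow> real^'n" and xstar :: "real^'n"
    and sync :: bool
  assumes M_pos: "M \<ge> 1"
    and grad: "\<And>x. (f has_derivative (\<lambda>h. gf x \<bullet> h)) (at x)"
    and strong_smooth: "\<And>x y. \<mu> / 2 * (norm (x - y))\<^sup>2 \<le> f x - f y - gf y \<bullet> (x - y)
                          \<and> f x - f y - gf y \<bullet> (x - y) \<le> L / 2 * (norm (x - y))\<^sup>2"
    and mu_pos: "\<mu> > 0"
    and xstar_min: "\<And>y. f xstar \<le> f y"
    and P_prob: "prob_space P"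
    and Dz_prob: "prob_space Dz"
    and Z_meas: "\<And>m. m < M \<Longrightarrow> Z m \<in> measurable P S"
    and Z_distr: "\<And>m. m < M \<Longrightarrow> distr P S (Z m) = Dz"
    and Z_indep: "prob_space.indep_vars P (\<lambda>_. S) Z {..<M}"
    and sets_Dz: "sets Dz = sets S"
    and sg_meas: "\<And>x. sgf x \<in> borel_measurable S"
    and sg_int: "\<And>x. integrable Dz (sgf x)"
    and sg_sq_int: "\<And>x. integrable Dz (\<lambda>z. (norm (sgf x z))\<^sup>2)"
    and sg_unbiased: "\<And>x. (\<integral>z. sgf x z \<partial>Dz) = gf x"
    and D_diag: "diag_mat D"
    and alpha_pos: "0 < \<alpha>" and alpha_le: "\<alpha> \<le> \<Gamma>"
    and D_bounds: "\<And>v. \<alpha> * (norm v)\<^sup>2 \<le> sqnormA D v \<and> sqnormA D v \<le> \<Gamma> * (norm v)\<^sup>2"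
    and gamma_pos: "\<gamma> > 0" and gamma_le: "\<gamma> \<le> \<alpha> / (4 * L)"
  shows
    "(\<integral>\<omega>. sqnormA D (avg M (savic_step M \<gamma> D sync xs (\<lambda>j. sgf (xs j) (Z j \<omega>))) - xstar) \<partial>P)
     \<le> (1 - \<gamma> * \<mu> / \<Gamma>) * sqnormA D (avg M xs - xstar)
       + \<gamma>\<^sup>2 / \<alpha> * (\<integral>\<omega>. (norm (avg M (\<lambda>j. sgf (xs j) (Z j \<omega>)) - avg M (\<lambda>j. gf (xs j))))\<^sup>2 \<partial>P)
       - \<gamma> / 2 * bregman f gf (avg M xs) xstar
       + 2 * \<gamma> * L / \<alpha> * ((1 / real M) * (\<Sum>m<M. sqnormA D (xs m - avg M xs)))"
proof -
  interpret P: prob_space P by (rule P_prob)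
  note sg_meas[measurable]
  have L_pos: "L > 0"
  proof (rule ccontr)
    assume "\<not> L > 0"
    then have "\<alpha> / (4 * L) \<le> 0" using alpha_pos by (simp add: divide_nonneg_nonpos)
    then show False using gamma_le gamma_pos by simp
  qed
  have gL: "\<gamma> * L / \<alpha> \<le> 1 / 4"
  proof -
    have "\<gamma> * L \<le> \<alpha> / (4 * L) * L" using gamma_le L_pos by (intro mult_right_mono) auto
    then have "\<gamma> * L \<le> \<alpha> / 4" using L_pos by simp
    then show ?thesis using alpha_pos by (simp add: field_simps)
  qed
  have Dlow: "\<And>v. \<alpha> * (norm v)\<^sup>2 \<le> sqnormA D v" using D_bounds by blast
  define I where "I = matrix_inv D"
  define xh where "xh = avg M xs"
  define B where "B = xh - xstar"
  define gb where "gb = avg M (\<lambda>j. gf (xs j))"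
  define G where "G = (\<lambda>\<omega>. avg M (\<lambda>j. sgf (xs j) (Z j \<omega>)))"
  define e where "e = (\<lambda>\<omega>. G \<omega> - gb)"
  define K where "K = sqnormA D B - 2 * \<gamma> * (B \<bullet> gb) + \<gamma>\<^sup>2 * ((I *v gb) \<bullet> gb)"
  define lin where "lin = (\<lambda>\<omega>. - 2 * \<gamma> * (B \<bullet> e \<omega>) + 2 * \<gamma>\<^sup>2 * ((I *v gb) \<bullet> e \<omega>))"
  define Q where "Q = (\<lambda>\<omega>. sqnormA D (avg M (savic_step M \<gamma> D sync xs (\<lambda>j. sgf (xs j) (Z j \<omega>))) - xstar))"
  define R where "R = (\<lambda>\<omega>. K + lin \<omega> + \<gamma>\<^sup>2 / \<alpha> * (norm (e \<omega>))\<^sup>2)"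
  have meas_g: "(\<lambda>\<omega>. sgf (xs j) (Z j \<omega>)) \<in> borel_measurable P" if "j < M" for j
    using measurable_compose[OF Z_meas[OF that] sg_meas] .
  have int_g: "integrable P (\<lambda>\<omega>. sgf (xs j) (Z j \<omega>))" if "j < M" for j
    using integrable_distr_eq[OF Z_meas[OF that] sg_meas[of "xs j"]] sg_int[of "xs j"] Z_distr[OF that] by simp
  have int_g_sq: "integrable P (\<lambda>\<omega>. (norm (sgf (xs j) (Z j \<omega>)))\<^sup>2)" if "j < M" for j
  proof -
    have m: "(\<lambda>z. (norm (sgf (xs j) z))\<^sup>2) \<in> borel_measurable S" by measurable
    show ?thesis
      using integrable_distr_eq[OF Z_meas[OF that] m] sg_sq_int[of "xs j"] Z_distr[OF that] by simp
  qed
  have E_g: "(\<integral>\<omega>. sgf (xs j) (Z j \<omega>) \<partial>P) = gf (xs j)" if "j < M" for j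
    using integral_distr[OF Z_meas[OF that] sg_meas[of "xs j"]] Z_distr[OF that] sg_unbiased[of "xs j"] by simp
  have int_G: "integrable P G"
    unfolding G_def avg_def using int_g by (intro integrable_scaleR_right Bochner_Integration.integrable_sum) auto
  have E_G: "(\<integral>\<omega>. G \<omega> \<partial>P) = gb"
  proof -
    have "(\<integral>\<omega>. G \<omega> \<partial>P) = (1 / real M) *\<^sub>R (\<Sum>j<M. (\<integral>\<omega>. sgf (xs j) (Z j \<omega>) \<partial>P))"
      unfolding G_def avg_def using int_g by (simp add: Bochner_Integration.integral_sum)
    also have "\<dots> = gb" unfolding gb_def avg_def using E_g by simp
    finally show ?thesis .
  qed
  have int_e: "integrable P e" unfolding e_def using int_G by simp
  have E_e: "(\<integral>\<omega>. e \<omega> \<partial>P) = 0"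
    unfolding e_def using int_G E_G by (simp add: P.prob_space)
  have meas_e: "e \<in> borel_measurable P" using int_e by (rule borel_measurable_integrable)
  have int_e_sq: "integrable P (\<lambda>\<omega>. (norm (e \<omega>))\<^sup>2)"
  proof (rule Bochner_Integration.integrable_bound)
    show "integrable P (\<lambda>\<omega>. (1 / real M) * (\<Sum>j<M. 2 * (norm (sgf (xs j) (Z j \<omega>)))\<^sup>2 + 2 * (norm (gf (xs j)))\<^sup>2))"
      using int_g_sq by (intro integrable_mult_right Bochner_Integration.integrable_sum integrable_add) auto
    show "(\<lambda>\<omega>. (norm (e \<omega>))\<^sup>2) \<in> borel_measurable P" using meas_e by measurable
    show "AE \<omega> in P. norm ((norm (e \<omega>))\<^sup>2) \<le> norm ((1 / real M) * (\<Sum>j<M. 2 * (norm (sgf (xs j) (Z j \<omega>)))\<^sup>2 + 2 * (norm (gf (xs j)))\<^sup>2))"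
    proof (rule AE_I2)
      fix \<omega>
      have ee: "e \<omega> = avg M (\<lambda>j. sgf (xs j) (Z j \<omega>) - gf (xs j))"
        unfolding e_def G_def gb_def by (rule avg_diff)
      have tri: "(norm (a - b))\<^sup>2 \<le> 2 * (norm a)\<^sup>2 + 2 * (norm b)\<^sup>2" for a b :: "real^'n"
      proof -
        have "norm (a - b) \<le> norm a + norm b" by (rule norm_triangle_ineq4)
        then have "(norm (a - b))\<^sup>2 \<le> (norm a + norm b)\<^sup>2" by (simp add: power_mono)
        also have "\<dots> \<le> 2 * (norm a)\<^sup>2 + 2 * (norm b)\<^sup>2" using zero_le_power2[of "norm a - norm b"] unfolding power2_diff power2_sum by linarith
        finally show ?thesis .
      qed
      have "(norm (e \<omega>))\<^sup>2 \<le> (1 / real M) * (\<Sum>j<M. (norm (sgf (xs j) (Z j \<omega>) - gf (xs j)))\<^sup>2)"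
        unfolding ee by (rule jensen_sq[OF M_pos])
      also have "\<dots> \<le> (1 / real M) * (\<Sum>j<M. 2 * (norm (sgf (xs j) (Z j \<omega>)))\<^sup>2 + 2 * (norm (gf (xs j)))\<^sup>2)"
        by (intro mult_left_mono sum_mono tri) auto
      finally have *: "(norm (e \<omega>))\<^sup>2 \<le> (1 / real M) * (\<Sum>j<M. 2 * (norm (sgf (xs j) (Z j \<omega>)))\<^sup>2 + 2 * (norm (gf (xs j)))\<^sup>2)" .
      then show "norm ((norm (e \<omega>))\<^sup>2) \<le> norm ((1 / real M) * (\<Sum>j<M. 2 * (norm (sgf (xs j) (Z j \<omega>)))\<^sup>2 + 2 * (norm (gf (xs j)))\<^sup>2))"
        by (smt (verit) real_norm_def zero_le_power2)
    qed
  qed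
  have Qeq: "Q \<omega> = K + lin \<omega> + \<gamma>\<^sup>2 * ((I *v e \<omega>) \<bullet> e \<omega>)" for \<omega>
  proof -
    have "avg M (savic_step M \<gamma> D sync xs (\<lambda>j. sgf (xs j) (Z j \<omega>))) - xstar = B - \<gamma> *\<^sub>R (I *v (gb + e \<omega>))"
      unfolding step_avg[OF M_pos] B_def xh_def I_def e_def G_def by simp
    then show ?thesis
      unfolding Q_def K_def lin_def I_def using quad_split[OF D_diag Dlow alpha_pos] by simp
  qed
  have QR: "Q \<omega> \<le> R \<omega>" for \<omega>
  proof -
    have "(I *v e \<omega>) \<bullet> e \<omega> \<le> (norm (e \<omega>))\<^sup>2 / \<alpha>" unfolding I_def using dinv_bound[OF Dlow alpha_pos] by blast
    then have "\<gamma>\<^sup>2 * ((I *v e \<omega>) \<bullet> e \<omega>) \<le> \<gamma>\<^sup>2 * ((norm (e \<omega>))\<^sup>2 / \<alpha>)" by (intro mult_left_mono) auto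
    then show ?thesis unfolding Qeq R_def by simp
  qed
  have Q0: "0 \<le> Q \<omega>" for \<omega>
    unfolding Q_def using Dlow alpha_pos by (smt (verit) mult_nonneg_nonneg zero_le_power2)
  have int_R: "integrable P R"
    unfolding R_def lin_def using int_e int_e_sq by (intro Bochner_Integration.integrable_add Bochner_Integration.integrable_diff integrable_mult_right integrable_inner_right) auto
  have meas_Q: "Q \<in> borel_measurable P"
  proof -
    have m1: "(\<lambda>\<omega>. I *v e \<omega>) \<in> borel_measurable P"
      using borel_measurable_continuous_on[OF matrix_vector_mult_linear_continuous_on meas_e] .
    have "(\<lambda>\<omega>. K + lin \<omega> + \<gamma>\<^sup>2 * ((I *v e \<omega>) \<bullet> e \<omega>)) \<in> borel_measurable P"
      unfolding lin_def using m1 meas_e by measurable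
    moreover have "Q = (\<lambda>\<omega>. K + lin \<omega> + \<gamma>\<^sup>2 * ((I *v e \<omega>) \<bullet> e \<omega>))"
      by (rule ext) (rule Qeq)
    ultimately show ?thesis by simp
  qed
  have int_Q: "integrable P Q"
    by (rule Bochner_Integration.integrable_bound[OF int_R meas_Q]) (use Q0 QR in \<open>auto intro!: AE_I2 simp: abs_of_nonneg intro: order_trans[OF _ abs_ge_self]\<close>)
  have "(\<integral>\<omega>. Q \<omega> \<partial>P) \<le> (\<integral>\<omega>. R \<omega> \<partial>P)"
    by (rule integral_mono[OF int_Q int_R QR])
  also have "(\<integral>\<omega>. R \<omega> \<partial>P) = K + \<gamma>\<^sup>2 / \<alpha> * (\<integral>\<omega>. (norm (e \<omega>))\<^sup>2 \<partial>P)"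
  proof -
    have il: "(\<integral>\<omega>. lin \<omega> \<partial>P) = 0"
      unfolding lin_def using int_e E_e by (simp add: Bochner_Integration.integral_add integral_diff)
    have "(\<integral>\<omega>. R \<omega> \<partial>P) = (\<integral>\<omega>. K \<partial>P) + (\<integral>\<omega>. lin \<omega> \<partial>P) + (\<integral>\<omega>. \<gamma>\<^sup>2 / \<alpha> * (norm (e \<omega>))\<^sup>2 \<partial>P)"
    proof -
      have i1: "integrable P (\<lambda>\<omega>. K)" by simp
      have i2: "integrable P lin" unfolding lin_def using int_e by simp
      have i3: "integrable P (\<lambda>\<omega>. \<gamma>\<^sup>2 / \<alpha> * (norm (e \<omega>))\<^sup>2)" using int_e_sq by simp
      show ?thesis unfolding R_def
        using Bochner_Integration.integral_add[OF Bochner_Integration.integrable_add[OF i1 i2] i3]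
          Bochner_Integration.integral_add[OF i1 i2] by simp
    qed
    then show ?thesis using il by (simp add: P.prob_space)
  qed
  finally have main1: "(\<integral>\<omega>. Q \<omega> \<partial>P) \<le> K + \<gamma>\<^sup>2 / \<alpha> * (\<integral>\<omega>. (norm (e \<omega>))\<^sup>2 \<partial>P)" .
  have Kle: "K \<le> sqnormA D B - 2 * \<gamma> * (B \<bullet> gb) + \<gamma>\<^sup>2 / \<alpha> * (norm gb)\<^sup>2"
  proof -
    have "(I *v gb) \<bullet> gb \<le> (norm gb)\<^sup>2 / \<alpha>" unfolding I_def using dinv_bound[OF Dlow alpha_pos] by blast
    then have "\<gamma>\<^sup>2 * ((I *v gb) \<bullet> gb) \<le> \<gamma>\<^sup>2 * ((norm gb)\<^sup>2 / \<alpha>)" by (intro mult_left_mono) auto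
    then show ?thesis unfolding K_def by simp
  qed
  have det: "sqnormA D B - 2 * \<gamma> * (B \<bullet> gb) + \<gamma>\<^sup>2 / \<alpha> * (norm gb)\<^sup>2
     \<le> (1 - \<gamma> * \<mu> / \<Gamma>) * sqnormA D (avg M xs - xstar)
       - \<gamma> / 2 * bregman f gf (avg M xs) xstar
       + 2 * \<gamma> * L / \<alpha> * ((1 / real M) * (\<Sum>m<M. sqnormA D (xs m - avg M xs)))"
    unfolding B_def xh_def gb_def
    by (rule det_part[OF M_pos strong_smooth mu_pos xstar_min alpha_pos alpha_le D_bounds gamma_pos L_pos gL])
  have "(\<integral>\<omega>. Q \<omega> \<partial>P) \<le> (1 - \<gamma> * \<mu> / \<Gamma>) * sqnormA D (avg M xs - xstar)
       + \<gamma>\<^sup>2 / \<alpha> * (\<integral>\<omega>. (norm (e \<omega>))\<^sup>2 \<partial>P)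
       - \<gamma> / 2 * bregman f gf (avg M xs) xstar
       + 2 * \<gamma> * L / \<alpha> * ((1 / real M) * (\<Sum>m<M. sqnormA D (xs m - avg M xs)))"
    using main1 Kle det by linarith
  then show ?thesis unfolding Q_def e_def G_def gb_def .
qed

end
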